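(* For any matching $\pi$ of size $n$, $\sum_{p=1}^{n-1} m_p(\pi)\le d(\pi)$, and $d(\pi)-\sum_{p=1}^{n-1} m_p(\pi)$ is an even nonnegative integer.
   Context: A matching of size $n$ is a set of $n$ disjoint noncrossing pairs partitioning $\{1,\dots,2n\}$ (no arches $\{i<j\},\{k<l\}$ with $i<k<j<l$). Encode $\pi$ by the increasing sequence $a_1<\dots<a_n$ of the smaller elements of its arches. The Young diagram $Y(\pi)$ has rows (top to bottom) of lengths $a_n-n\ge\dots\ge a_1-1$, and $d(\pi)=\sum_i(a_i-i)$ is its number of boxes. A box in row $x$ from the top and column $y$ from the left is $(x,y)$. Label box $(x,y)$ by $n+1-x-y$. The rim of a nonempty Young diagram is the set of boxes $(x,y)$ with $(x+1,y+1)$ not in the diagram; iteratively removing rims gives the rim decomposition $R_1,\dots,R_s$ of $Y(\pi)$. For each rim $R_\ell$ let $i$ be the label of its bottom-left box (in its leftmost column), $j$ the label of its top-right box (in its topmost row), $k$ its minimal label, and $B_\ell=\{k\}\cup\{i,\dots,k+1\}\cup\{j,\dots,k+1\}$ (multiset). For $1\le p\le n-1$, $m_p(\pi)$ is the multiplicity of $p$ in the multiset union of all $B_\ell$ (equivalently, $m_p(\pi)=\tfrac12(|\mathcal A^L_p|+|\mathcal A^R_p|)$ where, with $\widehat p=2n+1-p$, $\mathcal A^L_p$ is the set of arches $\{b<c\}$ with $b\le p<c<\widehat p$ and $\mathcal A^R_p$ the set of arches with $p<b<\widehat p\le c$). *)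

theory Defs
  imports Main "HOL-Library.Multiset"
begin

definition noncrossing_matching :: "nat \<Rightarrow> (nat \<times> nat) set \<Rightarrow> bool" where
  "noncrossing_matching n M \<longleftrightarrow>
     (\<forall>(i,j)\<in>M. i < j \<and> i \<in> {1..2*n} \<and> j \<in> {1..2*n}) \<and>
     (\<forall>x\<in>{1..2*n}. \<exists>!e. e \<in> M \<and> (x = fst e \<or> x = snd e)) \<and>
     (\<forall>(i,j)\<in>M. \<forall>(k,l)\<in>M. \<not> (i < k \<and> k < j \<and> j < l))"

definition opener :: "(nat \<times> nat) set \<Rightarrow> nat \<Rightarrow> nat" where
  "opener M i = sorted_list_of_set (fst ` M) ! (i - 1)"

definition dpi :: "nat \<Rightarrow> (nat \<times> nat) set \<Rightarrow> nat" where
  "dpi n M = (\<Sum>i=1..n. opener M i - i)"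

text \<open>Young diagram: box (x,y), row x from top (1..n), column y from left;
  row x has length a_{n+1-x} - (n+1-x).\<close>
definition young_diagram :: "nat \<Rightarrow> (nat \<times> nat) set \<Rightarrow> (nat \<times> nat) set" where
  "young_diagram n M = {(x,y). 1 \<le> x \<and> x \<le> n \<and> 1 \<le> y \<and> y \<le> opener M (n+1-x) - (n+1-x)}"

definition box_label :: "nat \<Rightarrow> nat \<times> nat \<Rightarrow> int" where
  "box_label n b = int n + 1 - int (fst b) - int (snd b)"

definition rim :: "(nat \<times> nat) set \<Rightarrow> (nat \<times> nat) set" where
  "rim D = {(x,y). (x,y) \<in> D \<and> (x+1, y+1) \<notin> D}"

definition rim_at :: "(nat \<times> nat) set \<Rightarrow> nat \<Rightarrow> (nat \<times> nat) set" where
  "rim_at D l = rim (((\<lambda>E. E - rim E) ^^ l) D)"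

text \<open>The rim decomposition R_1,...,R_s as a list (each nonempty rim; at most card D of them).\<close>
definition rim_decomposition :: "(nat \<times> nat) set \<Rightarrow> (nat \<times> nat) set list" where
  "rim_decomposition D = filter (\<lambda>R. R \<noteq> {}) (map (rim_at D) [0..<card D + 1])"

definition rim_B :: "nat \<Rightarrow> (nat \<times> nat) set \<Rightarrow> int multiset" where
  "rim_B n R =
    (let c = Min (snd ` R); bl = (Max {x. (x,c) \<in> R}, c);
         r = Min (fst ` R); tr = (r, Max {y. (r,y) \<in> R});
         i = box_label n bl; j = box_label n tr; k = Min (box_label n ` R)
     in {#k#} + mset_set {k+1..i} + mset_set {k+1..j})"

definition mult_m :: "nat \<Rightarrow> (nat \<times> nat) set \<Rightarrow> nat \<Rightarrow> nat" where
  "mult_m n M p = count (sum_list (map (rim_B n) (rim_decomposition (young_diagram n M)))) (int p)"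

end

theory Submission imports Defs begin

lemma nm_basic:
  assumes "noncrossing_matching n M"
  shows "finite M" "inj_on fst M" "card M = n" "card (fst`M) = n" "fst ` M \<subseteq> {1..2*n}"
    "\<And>e. e \<in> M \<Longrightarrow> fst e < snd e"
    "\<And>z. z \<in> {1..2*n} \<Longrightarrow> \<exists>e\<in>M. z = fst e \<or> z = snd e"
proof -
  have c1: "\<And>i j. (i,j) \<in> M \<Longrightarrow> i < j \<and> i \<in> {1..2*n} \<and> j \<in> {1..2*n}"
    and c2: "\<And>x. x\<in>{1..2*n} \<Longrightarrow> \<exists>!e. e \<in> M \<and> (x = fst e \<or> x = snd e)"
    using assms unfolding noncrossing_matching_def by auto
  have sub: "M \<subseteq> {1..2*n} \<times> {1..2*n}" using c1 by auto
  show fin: "finite M" by (rule finite_subset[OF sub]) auto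
  show "\<And>e. e \<in> M \<Longrightarrow> fst e < snd e" using c1 by (metis prod.collapse)
  show "\<And>z. z \<in> {1..2*n} \<Longrightarrow> \<exists>e\<in>M. z = fst e \<or> z = snd e" using c2 by blast
  show inj: "inj_on fst M"
  proof (rule inj_onI)
    fix e e' assume "e \<in> M" "e' \<in> M" "fst e = fst e'"
    moreover have "fst e \<in> {1..2*n}" using c1 \<open>e\<in>M\<close> by (metis prod.collapse)
    ultimately show "e = e'" using c2[of "fst e"] by metis
  qed
  have U: "{1..2*n} = (\<Union>e\<in>M. {fst e, snd e})"
  proof
    show "{1..2*n} \<subseteq> (\<Union>e\<in>M. {fst e, snd e})" using c2 by blast
    show "(\<Union>e\<in>M. {fst e, snd e}) \<subseteq> {1..2*n}" using sub by force
  qed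
  have "card (\<Union>e\<in>M. {fst e, snd e}) = (\<Sum>e\<in>M. card {fst e, snd e})"
  proof (rule card_UN_disjoint[OF fin])
    show "\<forall>i\<in>M. finite {fst i, snd i}" by auto
    show "\<forall>i\<in>M. \<forall>j\<in>M. i \<noteq> j \<longrightarrow> {fst i, snd i} \<inter> {fst j, snd j} = {}"
    proof (intro ballI impI)
      fix i j assume ij: "i \<in> M" "j \<in> M" "i \<noteq> j"
      show "{fst i, snd i} \<inter> {fst j, snd j} = {}"
      proof (rule ccontr)
        assume "{fst i, snd i} \<inter> {fst j, snd j} \<noteq> {}"
        then obtain z where z: "z \<in> {fst i, snd i}" "z \<in> {fst j, snd j}" by blast
        have "z \<in> {1..2*n}" using z(1) sub ij(1) by force
        then show False using c2[of z] z ij by blast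
      qed
    qed
  qed
  also have "\<dots> = (\<Sum>e\<in>M. 2)"
  proof (rule sum.cong)
    fix e assume "e \<in> M" then have "fst e < snd e" using c1 by (metis prod.collapse)
    then show "card {fst e, snd e} = 2" by auto
  qed simp
  finally have "card {1..2*n} = 2 * card M" using U by simp
  then show cM: "card M = n" by simp
  show "card (fst`M) = n" using card_image[OF inj] cM by simp
  show "fst ` M \<subseteq> {1..2*n}" using c1 by auto
qed

lemma strict_incr:
  assumes "sorted_wrt (<) (s::nat list)" "t \<le> t'" "t' < length s"
  shows "s!t + (t'-t) \<le> s!t'"
  using assms(2,3)
proof (induction t')
  case 0 then show ?case by simp
next
  case (Suc t')
  show ?case
  proof (cases "t = Suc t'")
    case False
    then have "t \<le> t'" using Suc by simp
    then have "s!t + (t'-t) \<le> s!t'" using Suc by simp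
    moreover have "s!t' < s!Suc t'" using assms(1) Suc.prems sorted_wrt_nth_less by fastforce
    ultimately show ?thesis using \<open>t \<le> t'\<close> by simp
  qed simp
qed

lemma opener_facts:
  assumes nm: "noncrossing_matching n M"
  shows "\<And>i. 1 \<le> i \<Longrightarrow> i \<le> n \<Longrightarrow> opener M i \<in> fst ` M"
    "\<And>i m. 1 \<le> i \<Longrightarrow> i \<le> m \<Longrightarrow> m \<le> n \<Longrightarrow> opener M i + (m - i) \<le> opener M m"
    "\<And>i. 1 \<le> i \<Longrightarrow> i \<le> n \<Longrightarrow> i \<le> opener M i"
    "\<And>m. 1 \<le> m \<Longrightarrow> m \<le> n \<Longrightarrow> opener M m \<le> 2*m - 1"
proof -
  define A where "A = fst ` M"
  define s where "s = sorted_list_of_set A"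
  have finM: "finite M" using nm_basic[OF nm] by simp
  have finA: "finite A" using finM A_def by simp
  have len: "length s = n" using nm_basic(4)[OF nm] s_def A_def finA by simp
  have st: "sorted_wrt (<) s" using s_def finA by simp
  have setS: "set s = A" using s_def finA by simp
  have op: "\<And>i. opener M i = s!(i-1)" using s_def A_def opener_def by simp
  show inA: "\<And>i. 1 \<le> i \<Longrightarrow> i \<le> n \<Longrightarrow> opener M i \<in> fst ` M"
    using op len setS A_def by (metis Suc_le_eq diff_less le_trans less_numeral_extra(1) nth_mem)
  show inc: "\<And>i m. 1 \<le> i \<Longrightarrow> i \<le> m \<Longrightarrow> m \<le> n \<Longrightarrow> opener M i + (m - i) \<le> opener M m"
  proof -
    fix i m :: nat assume "1 \<le> i" "i \<le> m" "m \<le> n"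
    then have "s!(i-1) + ((m-1)-(i-1)) \<le> s!(m-1)" using strict_incr[OF st, of "i-1" "m-1"] len by simp
    then show "opener M i + (m - i) \<le> opener M m" using op \<open>1 \<le> i\<close> by simp
  qed
  have A12: "A \<subseteq> {1..2*n}" using nm_basic(5)[OF nm] A_def by simp
  show "\<And>i. 1 \<le> i \<Longrightarrow> i \<le> n \<Longrightarrow> i \<le> opener M i"
  proof -
    fix i :: nat assume "1 \<le> i" "i \<le> n"
    have "opener M 1 \<ge> 1" using inA[of 1] A12 A_def \<open>1 \<le> i\<close> \<open>i \<le> n\<close> by force
    then show "i \<le> opener M i" using inc[of 1 i] \<open>1 \<le> i\<close> \<open>i \<le> n\<close> by simp
  qed
  show "\<And>m. 1 \<le> m \<Longrightarrow> m \<le> n \<Longrightarrow> opener M m \<le> 2*m - 1"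
  proof -
    fix m :: nat assume m: "1 \<le> m" "m \<le> n"
    define v where "v = opener M m"
    have vA: "v \<in> A" using inA m v_def A_def by simp
    then have v2n: "v \<le> 2*n" "1 \<le> v" using A12 by auto
    define Mv where "Mv = {e \<in> M. fst e < v}"
    have finMv: "finite Mv" using finM Mv_def by simp
    have sub1: "{1..v} \<subseteq> insert v (\<Union>e\<in>Mv. {fst e, snd e})"
    proof
      fix z assume z: "z \<in> {1..v}"
      then have "z \<in> {1..2*n}" using v2n by simp
      then obtain e where e: "e \<in> M" "z = fst e \<or> z = snd e" using nm_basic(7)[OF nm] by blast
      have "fst e < snd e" using nm_basic(6)[OF nm e(1)] .
      then have "fst e \<le> z" using e(2) by auto
      show "z \<in> insert v (\<Union>e\<in>Mv. {fst e, snd e})"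
      proof (cases "fst e < v")
        case True then have "e \<in> Mv" using e Mv_def by simp
        then show ?thesis using e(2) by blast
      next
        case False then have "fst e = v" using \<open>fst e \<le> z\<close> z by simp
        then have "z = v" using e(2) \<open>fst e < snd e\<close> z by auto
        then show ?thesis by simp
      qed
    qed
    have "{a \<in> A. a < v} \<subseteq> (\<lambda>t. s!t) ` {..<m-1}"
    proof
      fix a assume a: "a \<in> {a \<in> A. a < v}"
      then obtain t where t: "t < n" "a = s!t" using setS len by (metis in_set_conv_nth mem_Collect_eq)
      have "t < m - 1"
      proof (rule ccontr)
        assume "\<not> t < m - 1"
        then have "s!(m-1) + (t - (m-1)) \<le> s!t" using strict_incr[OF st, of "m-1" t] len t by simp
        then show False using a t op v_def by simp
      qed
      then show "a \<in> (\<lambda>t. s!t) ` {..<m-1}" using t by simp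
    qed
    then have "card {a \<in> A. a < v} \<le> card ((\<lambda>t. s!t) ` {..<m-1})" by (intro card_mono) auto
    also have "\<dots> \<le> card {..<m-1}" by (rule card_image_le) simp
    finally have cAv: "card {a \<in> A. a < v} \<le> m - 1" by simp
    have "fst ` Mv \<subseteq> {a \<in> A. a < v}" using Mv_def A_def by auto
    moreover have "card (fst ` Mv) = card Mv"
      using card_image nm_basic(2)[OF nm] Mv_def by (metis (no_types, lifting) inj_on_subset mem_Collect_eq subsetI)
    ultimately have cMv: "card Mv \<le> m - 1" using finA cAv card_mono[of "{a \<in> A. a < v}" "fst ` Mv"]
      by simp
    have "card (\<Union>e\<in>Mv. {fst e, snd e}) \<le> (\<Sum>e\<in>Mv. card {fst e, snd e})" by (rule card_UN_le[OF finMv])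
    also have "\<dots> \<le> (\<Sum>e\<in>Mv. 2)" by (rule sum_mono) (simp add: card_insert_le_m1)
    also have "\<dots> = 2 * card Mv" by simp
    finally have "card (\<Union>e\<in>Mv. {fst e, snd e}) \<le> 2 * (m - 1)" using cMv by simp
    moreover have "card {1..v} \<le> card (insert v (\<Union>e\<in>Mv. {fst e, snd e}))"
      by (rule card_mono[OF _ sub1]) (simp add: finMv)
    moreover have "card (insert v (\<Union>e\<in>Mv. {fst e, snd e})) \<le> Suc (card (\<Union>e\<in>Mv. {fst e, snd e}))"
      by (simp add: card_insert_le_m1 finMv card_insert_if)
    ultimately have "v \<le> Suc (2*(m-1))" by simp
    then show "opener M m \<le> 2*m - 1" using v_def m by simp
  qed
qed

definition downset :: "(nat \<times> nat) set \<Rightarrow> bool" where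
  "downset E \<longleftrightarrow> finite E \<and> (\<forall>x y. (x,y) \<in> E \<longrightarrow> 1 \<le> x \<and> 1 \<le> y) \<and>
     (\<forall>x y x' y'. (x,y) \<in> E \<longrightarrow> 1 \<le> x' \<longrightarrow> x' \<le> x \<longrightarrow> 1 \<le> y' \<longrightarrow> y' \<le> y \<longrightarrow> (x',y') \<in> E)"

lemma yd_props:
  assumes nm: "noncrossing_matching n M"
  shows "downset (young_diagram n M)"
    "\<And>b. b \<in> young_diagram n M \<Longrightarrow> 1 \<le> box_label n b \<and> box_label n b \<le> int n - 1"
    "card (young_diagram n M) = dpi n M"
proof -
  note of = opener_facts[OF nm]
  let ?D = "young_diagram n M"
  let ?len = "\<lambda>x. opener M (n+1-x) - (n+1-x)"
  have Dsig: "?D = Sigma {1..n} (\<lambda>x. {1..?len x})" unfolding young_diagram_def by auto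
  have fin: "finite ?D" unfolding Dsig by simp
  have mono: "\<And>x x'. 1 \<le> x' \<Longrightarrow> x' \<le> x \<Longrightarrow> x \<le> n \<Longrightarrow> ?len x \<le> ?len x'"
  proof -
    fix x x' :: nat assume "1 \<le> x'" "x' \<le> x" "x \<le> n"
    then have "opener M (n+1-x) + ((n+1-x') - (n+1-x)) \<le> opener M (n+1-x')"
      using of(2)[of "n+1-x" "n+1-x'"] by simp
    then show "?len x \<le> ?len x'" using \<open>x' \<le> x\<close> \<open>x \<le> n\<close> by arith
  qed
  show "downset ?D" unfolding downset_def
  proof (intro conjI allI impI)
    show "finite ?D" by (rule fin)
    fix x y assume "(x,y) \<in> ?D" then show "1 \<le> x" "1 \<le> y" unfolding young_diagram_def by auto
  next
    fix x y x' y' assume h: "(x,y) \<in> ?D" "1 \<le> x'" "x' \<le> x" "1 \<le> y'" "y' \<le> y"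
    then have "x \<le> n" "y \<le> ?len x" unfolding young_diagram_def by auto
    then show "(x',y') \<in> ?D" using mono[of x' x] h unfolding young_diagram_def by auto
  qed
  show "\<And>b. b \<in> ?D \<Longrightarrow> 1 \<le> box_label n b \<and> box_label n b \<le> int n - 1"
  proof -
    fix b assume "b \<in> ?D"
    then obtain x y where b: "b = (x,y)" "1 \<le> x" "x \<le> n" "1 \<le> y" "y \<le> ?len x"
      unfolding young_diagram_def by auto
    have "opener M (n+1-x) \<le> 2*(n+1-x) - 1" using of(4)[of "n+1-x"] b by simp
    then have "y \<le> n - x" using b by simp
    then show "1 \<le> box_label n b \<and> box_label n b \<le> int n - 1"
      using b unfolding box_label_def by simp
  qed
  have "card ?D = (\<Sum>x=1..n. ?len x)" unfolding Dsig by (simp add: card_SigmaI)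
  also have "\<dots> = (\<Sum>i=1..n. opener M i - i)"
    by (rule sum.reindex_bij_witness[where i="\<lambda>i. n+1-i" and j="\<lambda>i. n+1-i"]) auto
  finally show "card ?D = dpi n M" unfolding dpi_def .
qed

lemma rim_main:
  assumes ds: "downset E" and ne: "E \<noteq> {}"
    and lab: "\<And>b. b \<in> E \<Longrightarrow> 1 \<le> box_label n b \<and> box_label n b \<le> int n - 1"
  shows "\<exists>t. card (rim E) = size (rim_B n (rim E)) + 2*t"
    "set_mset (rim_B n (rim E)) \<subseteq> {1..int n - 1}"
proof -
  have finE: "finite E" and pos: "\<And>x y. (x,y) \<in> E \<Longrightarrow> 1 \<le> x \<and> 1 \<le> y"
    and dc: "\<And>x y x' y'. (x,y) \<in> E \<Longrightarrow> 1 \<le> x' \<Longrightarrow> x' \<le> x \<Longrightarrow> 1 \<le> y' \<Longrightarrow> y' \<le> y \<Longrightarrow> (x',y') \<in> E"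
    using ds unfolding downset_def by blast+
  define r where "r = Max (fst ` E)"
  define c where "c = Max (snd ` E)"
  define R where "R = rim E"
  have xr: "\<And>x y. (x,y) \<in> E \<Longrightarrow> x \<le> r" unfolding r_def using finE by (metis Max_ge finite_imageI fst_conv image_eqI)
  have yc: "\<And>x y. (x,y) \<in> E \<Longrightarrow> y \<le> c" unfolding c_def using finE by (metis Max_ge finite_imageI snd_conv image_eqI)
  have "r \<in> fst ` E" unfolding r_def using finE ne by simp
  then obtain y0 where "(r,y0) \<in> E" by force
  then have r1E: "(r,1) \<in> E" using dc pos by blast
  have "c \<in> snd ` E" unfolding c_def using finE ne by simp
  then obtain x0 where "(x0,c) \<in> E" by force
  then have c1E: "(1,c) \<in> E" using dc pos by blast
  have r1: "1 \<le> r" "1 \<le> c" using pos r1E c1E by auto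
  have RE: "R \<subseteq> E" unfolding R_def rim_def by auto
  have finR: "finite R" using finite_subset[OF RE finE] .
  have inR: "\<And>x y. (x,y) \<in> R \<longleftrightarrow> (x,y) \<in> E \<and> (x+1,y+1) \<notin> E" unfolding R_def rim_def by simp
  have r1R: "(r,1) \<in> R" using inR r1E xr by fastforce
  have c1R: "(1,c) \<in> R" using inR c1E yc by fastforce
  have injR: "inj_on (\<lambda>(x,y). int y - int x) R"
  proof (rule inj_onI)
    fix a b assume ab: "a \<in> R" "b \<in> R" "(\<lambda>(x,y). int y - int x) a = (\<lambda>(x,y). int y - int x) b"
    obtain x y x' y' where xy: "a = (x,y)" "b = (x',y')" by force
    have eq: "int y - int x = int y' - int x'" using ab xy by simp
    show "a = b"
    proof (cases x x' rule: linorder_cases)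
      case less
      then have "(x+1,y+1) \<in> E" using dc[of x' y' "x+1" "y+1"] ab(2) xy RE eq pos[of x y] ab(1) by auto
      then show ?thesis using ab(1) xy inR by simp
    next
      case greater
      then have "(x'+1,y'+1) \<in> E" using dc[of x y "x'+1" "y'+1"] ab(1) xy RE eq pos[of x' y'] ab(2) by auto
      then show ?thesis using ab(2) xy inR by simp
    next
      case equal then show ?thesis using xy eq by simp
    qed
  qed
  have imgR: "(\<lambda>(x,y). int y - int x) ` R = {1 - int r .. int c - 1}"
  proof
    show "(\<lambda>(x,y). int y - int x) ` R \<subseteq> {1 - int r .. int c - 1}"
    proof
      fix z assume "z \<in> (\<lambda>(x,y). int y - int x) ` R"
      then obtain x y where "(x,y) \<in> R" "z = int y - int x" by force
      then have "(x,y) \<in> E" "z = int y - int x" using RE by auto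
      then show "z \<in> {1 - int r .. int c - 1}" using pos xr yc by fastforce
    qed
    show "{1 - int r .. int c - 1} \<subseteq> (\<lambda>(x,y). int y - int x) ` R"
    proof
      fix d assume d: "d \<in> {1 - int r .. int c - 1}"
      define G where "G = {p \<in> E. int (snd p) - int (fst p) = d}"
      have "G \<noteq> {}"
      proof (cases "d \<ge> 0")
        case True
        then have "(1, nat (d+1)) \<in> E" using dc[OF c1E] d by auto
        then have "(1, nat (d+1)) \<in> G" using True unfolding G_def by simp
        then show ?thesis by blast
      next
        case False
        then have "(nat (1-d), 1) \<in> E" using dc[OF r1E] d by auto
        then have "(nat (1-d), 1) \<in> G" using False unfolding G_def by simp
        then show ?thesis by blast
      qed
      moreover have finG: "finite G" using finE G_def by simp
      ultimately have "Max (fst ` G) \<in> fst ` G" by simp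
      then obtain x y where xyG: "(x,y) \<in> G" "x = Max (fst ` G)" by force
      have "(x+1,y+1) \<notin> E"
      proof
        assume "(x+1,y+1) \<in> E"
        then have "(x+1,y+1) \<in> G" using xyG unfolding G_def by simp
        then have "x+1 \<le> Max (fst ` G)" using finG by (metis Max_ge finite_imageI fst_conv image_eqI)
        then show False using xyG by simp
      qed
      then have "(x,y) \<in> R" using xyG inR unfolding G_def by simp
      moreover have "d = int y - int x" using xyG unfolding G_def by simp
      ultimately show "d \<in> (\<lambda>(x,y). int y - int x) ` R" by force
    qed
  qed
  have cardR: "card R = r + c - 1"
  proof -
    have "card R = card ((\<lambda>(x,y). int y - int x) ` R)" using card_image[OF injR] by simp
    also have "\<dots> = r + c - 1" using imgR r1 by simp
    finally show ?thesis .
  qed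
  have m1: "Min (snd ` R) = 1"
  proof (rule antisym)
    show "Min (snd ` R) \<le> 1" using finR r1R by (metis Min_le finite_imageI snd_conv image_eqI)
    show "1 \<le> Min (snd ` R)" using finR r1R RE pos by (subst Min_ge_iff) force+
  qed
  have m2: "Max {x. (x,1) \<in> R} = r"
  proof (rule antisym)
    have fin: "finite {x. (x,1) \<in> R}" by (rule finite_subset[of _ "{..r}"]) (use RE xr in auto)
    show "Max {x. (x,1) \<in> R} \<le> r" using fin r1R RE xr by (subst Max_le_iff) force+
    show "r \<le> Max {x. (x,1) \<in> R}" using fin r1R by (simp add: Max_ge)
  qed
  have m3: "Min (fst ` R) = 1"
  proof (rule antisym)
    show "Min (fst ` R) \<le> 1" using finR c1R by (metis Min_le finite_imageI fst_conv image_eqI)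
    show "1 \<le> Min (fst ` R)" using finR c1R RE pos by (subst Min_ge_iff) force+
  qed
  have m4: "Max {y. (1,y) \<in> R} = c"
  proof (rule antisym)
    have fin: "finite {y. (1,y) \<in> R}" by (rule finite_subset[of _ "{..c}"]) (use RE yc in auto)
    show "Max {y. (1,y) \<in> R} \<le> c" using fin c1R RE yc by (subst Max_le_iff) force+
    show "c \<le> Max {y. (1,y) \<in> R}" using fin c1R by (simp add: Max_ge)
  qed
  define i where "i = box_label n (r,1)"
  define j where "j = box_label n (1,c)"
  define k where "k = Min (box_label n ` R)"
  have RB: "rim_B n R = {#k#} + mset_set {k+1..i} + mset_set {k+1..j}"
    unfolding rim_B_def Let_def m1 m2 m3 m4 i_def j_def k_def by simp
  have neR: "R \<noteq> {}" using r1R by auto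
  have ki: "k \<le> i" unfolding k_def i_def using finR r1R by simp
  have kj: "k \<le> j" unfolding k_def j_def using finR c1R by simp
  have kin: "k \<in> box_label n ` R" unfolding k_def using finR neR by simp
  then have k1: "1 \<le> k" using lab RE by force
  have klow: "int n + 1 - int r - int c \<le> k" unfolding k_def using finR neR
  proof (subst Min_ge_iff)
    show "\<forall>a\<in>box_label n ` R. int n + 1 - int r - int c \<le> a"
    proof
      fix a assume "a \<in> box_label n ` R"
      then obtain x y where "(x,y) \<in> R" "a = box_label n (x,y)" by force
      then show "int n + 1 - int r - int c \<le> a" using RE xr yc unfolding box_label_def by force
    qed
  qed auto
  have iv: "i = int n - int r" "j = int n - int c" unfolding i_def j_def box_label_def by simp_all
  have sz: "size (rim_B n R) = 1 + nat (i - k) + nat (j - k)" unfolding RB by simp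
  show "\<exists>t. card (rim E) = size (rim_B n (rim E)) + 2*t"
  proof
    show "card (rim E) = size (rim_B n (rim E)) + 2 * nat (int r + int c - int n - 1 + k)"
      using sz cardR ki kj klow iv r1 unfolding R_def[symmetric] by simp
  qed
  show "set_mset (rim_B n (rim E)) \<subseteq> {1..int n - 1}"
    unfolding R_def[symmetric] RB using k1 iv r1 ki kj lab[OF r1E] by auto
qed

abbreviation Fr :: "(nat \<times> nat) set \<Rightarrow> (nat \<times> nat) set" where
  "Fr \<equiv> (\<lambda>E. E - rim E)"

lemma downset_F: assumes "downset E" shows "downset (Fr E)"
proof -
  have finE: "finite E" and pos: "\<And>x y. (x,y) \<in> E \<Longrightarrow> 1 \<le> x \<and> 1 \<le> y"
    and dc: "\<And>x y x' y'. (x,y) \<in> E \<Longrightarrow> 1 \<le> x' \<Longrightarrow> x' \<le> x \<Longrightarrow> 1 \<le> y' \<Longrightarrow> y' \<le> y \<Longrightarrow> (x',y') \<in> E"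
    using assms unfolding downset_def by blast+
  have mem: "\<And>x y. (x,y) \<in> Fr E \<longleftrightarrow> (x,y) \<in> E \<and> (x+1,y+1) \<in> E" unfolding rim_def by auto
  show ?thesis unfolding downset_def
  proof (intro conjI allI impI)
    show "finite (Fr E)" using finE by simp
  next
    fix x y assume "(x,y) \<in> Fr E" then show "1 \<le> x" "1 \<le> y" using mem pos by blast+
  next
    fix x y x' y' assume h: "(x,y) \<in> Fr E" "1 \<le> x'" "x' \<le> x" "1 \<le> y'" "y' \<le> y"
    then have a: "(x,y) \<in> E" "(x+1,y+1) \<in> E" using mem by auto
    have "(x',y') \<in> E" using dc[OF a(1)] h by blast
    moreover have "(x'+1,y'+1) \<in> E" using dc[OF a(2), of "x'+1" "y'+1"] h by simp
    ultimately show "(x',y') \<in> Fr E" using mem by blast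
  qed
qed

lemma iter_props: "downset D \<Longrightarrow> downset ((Fr^^l) D) \<and> (Fr^^l) D \<subseteq> D"
  by (induction l) (auto simp: downset_F)

lemma rim_ne: assumes "finite E" "E \<noteq> {}" shows "rim E \<noteq> {}"
proof -
  have "Max (fst ` E) \<in> fst ` E" using assms by simp
  then obtain y where y: "(Max (fst ` E), y) \<in> E" by force
  have "\<forall>p\<in>E. fst p \<le> Max (fst ` E)" using assms by simp
  then have "(Max (fst ` E) + 1, y+1) \<notin> E" by force
  then show ?thesis using y unfolding rim_def by blast
qed

lemma card_sum: "finite D \<Longrightarrow> (\<Sum>l<N. card (rim ((Fr^^l) D))) + card ((Fr^^N) D) = card D"
proof (induction N)
  case 0 then show ?case by simp
next
  case (Suc N)
  have fin: "finite ((Fr^^N) D)" by (rule finite_subset[OF _ Suc.prems]) (induction N, auto)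
  have "card ((Fr^^N) D) = card (rim ((Fr^^N) D)) + card (Fr ((Fr^^N) D))"
  proof -
    have sub: "rim ((Fr^^N) D) \<subseteq> (Fr^^N) D" unfolding rim_def by auto
    show ?thesis using card_Diff_subset[OF finite_subset[OF sub fin] sub] card_mono[OF fin sub] by simp
  qed
  then show ?case using Suc by simp
qed

lemma card_dec: "finite D \<Longrightarrow> card ((Fr^^N) D) \<le> card D - N"
proof (induction N)
  case 0 then show ?case by simp
next
  case (Suc N)
  have fin: "finite ((Fr^^N) D)" by (rule finite_subset[OF _ Suc.prems]) (induction N, auto)
  show ?case
  proof (cases "(Fr^^N) D = {}")
    case True then show ?thesis by simp
  next
    case False
    have sub: "rim ((Fr^^N) D) \<subseteq> (Fr^^N) D" unfolding rim_def by auto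
    have "rim ((Fr^^N) D) \<noteq> {}" using rim_ne[OF fin False] .
    then have "card (Fr ((Fr^^N) D)) < card ((Fr^^N) D)"
      using fin sub by (intro psubset_card_mono) auto
    then show ?thesis using Suc by simp
  qed
qed

lemma sum_list_filter_card:
  "sum_list (map card (filter (\<lambda>R. R \<noteq> {}) xs)) = sum_list (map card xs)"
  by (induction xs) auto

lemma sum_list_upt_lessThan: "sum_list (map f [0..<N]) = (\<Sum>l<N. f l)"
  by (induction N) auto

lemma list_even:
  "(\<forall>R\<in>set L. \<exists>t. card R = size (B R) + 2*t) \<Longrightarrow>
   \<exists>T. sum_list (map card L) = sum_list (map (\<lambda>R. size (B R)) L) + 2*T"
proof (induction L)
  case Nil then show ?case by simp
next
  case (Cons a L)
  then obtain T t where "sum_list (map card L) = sum_list (map (\<lambda>R. size (B R)) L) + 2*T"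
    "card a = size (B a) + 2*t" by auto
  then show ?case by (intro exI[of _ "T+t"]) simp
qed

lemma list_mset:
  "(\<forall>R\<in>set L. set_mset (B R) \<subseteq> S) \<Longrightarrow>
   set_mset (sum_list (map B L)) \<subseteq> S \<and> size (sum_list (map B L)) = sum_list (map (\<lambda>R. size (B R)) L)"
  by (induction L) auto

lemma count_sum_size:
  assumes "set_mset X \<subseteq> {1..int n - 1}"
  shows "(\<Sum>p=1..n-1. count X (int p)) = size X"
proof -
  have "size X = sum (count X) (set_mset X)" by (simp add: size_multiset_overloaded_eq)
  also have "\<dots> = sum (count X) {1..int n - 1}"
    by (rule sum.mono_neutral_left) (use assms in \<open>auto simp: count_eq_zero_iff\<close>)
  also have "{1..int n - 1} = int ` {1..n-1}"
    by (cases n) (auto simp: image_int_atLeastAtMost)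
  also have "sum (count X) (int ` {1..n-1}) = (\<Sum>p=1..n-1. count X (int p))"
    by (simp add: sum.reindex)
  finally show ?thesis by simp
qed

theorem proposition3p3:
  fixes n :: nat and M :: "(nat \<times> nat) set"
  assumes "noncrossing_matching n M"
  shows "(\<Sum>p=1..n-1. mult_m n M p) \<le> dpi n M \<and> even (dpi n M - (\<Sum>p=1..n-1. mult_m n M p))"
proof -
  define D where "D = young_diagram n M"
  define L where "L = rim_decomposition D"
  define X where "X = sum_list (map (rim_B n) L)"
  have dsD: "downset D" and labD: "\<And>b. b \<in> D \<Longrightarrow> 1 \<le> box_label n b \<and> box_label n b \<le> int n - 1"
    and cD: "card D = dpi n M" using yd_props[OF assms] D_def by auto
  have finD: "finite D" using dsD downset_def by blast
  have good: "\<And>R. R \<in> set L \<Longrightarrow> (\<exists>t. card R = size (rim_B n R) + 2*t) \<and> set_mset (rim_B n R) \<subseteq> {1..int n - 1}"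
  proof -
    fix R assume "R \<in> set L"
    then obtain l where R: "R = rim ((Fr^^l) D)" "R \<noteq> {}"
      unfolding L_def rim_decomposition_def rim_at_def by (auto simp del: upt_Suc)
    have ne: "(Fr^^l) D \<noteq> {}" using R unfolding rim_def by auto
    have p: "downset ((Fr^^l) D)" "(Fr^^l) D \<subseteq> D" using iter_props[OF dsD] by auto
    show "(\<exists>t. card R = size (rim_B n R) + 2*t) \<and> set_mset (rim_B n R) \<subseteq> {1..int n - 1}"
      using rim_main[OF p(1) ne, of n] labD p(2) R(1) by blast
  qed
  have lm: "set_mset X \<subseteq> {1..int n - 1} \<and> size X = sum_list (map (\<lambda>R. size (rim_B n R)) L)"
    unfolding X_def by (rule list_mset) (use good in blast)
  obtain T where T: "sum_list (map card L) = sum_list (map (\<lambda>R. size (rim_B n R)) L) + 2*T"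
    using list_even[of L "rim_B n"] good by blast
  have "sum_list (map card L) = (\<Sum>l<card D + 1. card (rim_at D l))"
    unfolding L_def rim_decomposition_def sum_list_filter_card
    by (simp add: sum_list_upt_lessThan del: upt_Suc)
  also have "\<dots> = card D"
  proof -
    have "card ((Fr^^(card D + 1)) D) = 0" using card_dec[OF finD, of "card D + 1"] by simp
    then show ?thesis using card_sum[OF finD, of "card D + 1"] unfolding rim_at_def by simp
  qed
  finally have cL: "sum_list (map card L) = card D" .
  have "(\<Sum>p=1..n-1. mult_m n M p) = (\<Sum>p=1..n-1. count X (int p))"
    unfolding mult_m_def X_def L_def D_def by simp
  also have "\<dots> = size X" using count_sum_size lm by blast
  finally have "(\<Sum>p=1..n-1. mult_m n M p) + 2*T = dpi n M" using lm T cL cD by simp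
  then have "dpi n M - (\<Sum>p=1..n-1. mult_m n M p) = 2*T" "(\<Sum>p=1..n-1. mult_m n M p) \<le> dpi n M" by linarith+
  then show ?thesis by simp
qed

end
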